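(* Let $\Theta$ be a finite set, $b$ a belief function on $\Theta$ with mass function $m_b$, and $\emptyset \subsetneq A \subseteq \Theta$. The set of $L_1$ conditional belief functions of $b$ with respect to $A$ in the mass space, i.e. the set of belief functions $a$ with $\vec{m}_a \in \mathcal{M}_A$ minimizing $\|\vec{m}_b - \vec{m}_a\|_{L_1}$ over $\mathcal{M}_A$, is \[ \Big\{ a : 2^\Theta\to[0,1] \text{ belief function} : \mathcal{C}_a \subseteq A,\ m_a(B) \geq m_b(B)\ \forall\, \emptyset \subsetneq B \subseteq A \Big\}. \]
   Context: A mass function on a finite set $\Theta$ is $m:2^\Theta\to[0,1]$ with $m(\emptyset)=0$ and $\sum_{A\subseteq\Theta} m(A)=1$; the associated belief function is $b(A)=\sum_{B\subseteq A} m_b(B)$. Focal elements are subsets with nonzero mass; the core $\mathcal{C}_a$ of a belief function $a$ is the union of its focal elements. The mass vector of $b$ is $\vec{m}_b=[m_b(B)]_{\emptyset\subsetneq B\subseteq\Theta}\in\mathbb{R}^{2^{|\Theta|}-1}$. For $\emptyset\subsetneq A\subseteq\Theta$, $\mathcal{M}_A$ is the set of mass vectors of belief functions all of whose focal elements are subsets of $A$ (the convex hull of the mass vectors of the categorical belief functions $m(B)=1$, $\emptyset\subsetneq B\subseteq A$). The $L_1$ distance is $\|\vec{m}_b-\vec{m}_{b'}\|_{L_1}=\sum_{\emptyset\subsetneq B\subseteq\Theta}|m_b(B)-m_{b'}(B)|$. *)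

theory Defs
  imports Complex_Main
begin

text \<open>The frame Theta is the (finite) universe of the type 'a. A mass function is a
function on all subsets of Theta.\<close>

definition is_mass :: "('a::finite set \<Rightarrow> real) \<Rightarrow> bool" where
  "is_mass m \<longleftrightarrow> m {} = 0 \<and> (\<forall>B. 0 \<le> m B \<and> m B \<le> 1) \<and> (\<Sum>B\<in>UNIV. m B) = 1"

definition bel :: "('a::finite set \<Rightarrow> real) \<Rightarrow> 'a set \<Rightarrow> real" where
  "bel m A = (\<Sum>B\<in>Pow A. m B)"

definition focal_elements :: "('a::finite set \<Rightarrow> real) \<Rightarrow> 'a set set" where
  "focal_elements m = {B. m B \<noteq> 0}"

definition core :: "('a::finite set \<Rightarrow> real) \<Rightarrow> 'a set" where
  "core m = \<Union>(focal_elements m)"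

definition mass_space_M :: "'a::finite set \<Rightarrow> ('a set \<Rightarrow> real) set" where
  "mass_space_M A = {m. is_mass m \<and> (\<forall>B\<in>focal_elements m. B \<subseteq> A)}"

definition L1_dist :: "('a::finite set \<Rightarrow> real) \<Rightarrow> ('a set \<Rightarrow> real) \<Rightarrow> real" where
  "L1_dist m m' = (\<Sum>B\<in>{B. B \<noteq> {}}. \<bar>m B - m' B\<bar>)"

end

theory Submission
  imports Defs
begin

lemma split_sum:
  fixes f :: "'a::finite set \<Rightarrow> real"
  shows "sum f {B. B \<noteq> {}} = sum f {B. B \<noteq> {} \<and> B \<subseteq> A} + sum f {B. \<not> B \<subseteq> A}"
proof -
  have "{B. B \<noteq> {}} = {B. B \<noteq> {} \<and> B \<subseteq> A} \<union> {B. \<not> B \<subseteq> A}" by auto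
  then show ?thesis by (simp add: sum.union_disjoint disjoint_iff)
qed

lemma sum_univ:
  fixes f :: "'a::finite set \<Rightarrow> real"
  assumes "f {} = 0"
  shows "sum f UNIV = sum f {B. B \<noteq> {}}"
proof -
  have "UNIV = insert {} {B::'a set. B \<noteq> {}}" by auto
  have "sum f (insert {} {B::'a set. B \<noteq> {}}) = sum f {B::'a set. B \<noteq> {}}"
    using assms by (subst sum.insert) auto
  then show ?thesis using \<open>UNIV = _\<close> by metis
qed

lemma inM_zero:
  assumes "m \<in> mass_space_M A" "\<not> B \<subseteq> A"
  shows "m B = 0"
  using assms unfolding mass_space_M_def focal_elements_def by auto

lemma inM_sum:
  assumes "m \<in> mass_space_M A"
  shows "sum m {B. B \<noteq> {} \<and> B \<subseteq> A} = 1"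
proof -
  have m: "is_mass m" using assms by (simp add: mass_space_M_def)
  have "sum m {B. \<not> B \<subseteq> A} = 0" using inM_zero[OF assms] by simp
  then show ?thesis using m split_sum[of m A] sum_univ[of m] by (simp add: is_mass_def)
qed

lemma L1_form:
  assumes mb: "is_mass mb" and "m \<in> mass_space_M A"
  defines "k \<equiv> sum mb {B. \<not> B \<subseteq> A}"
  shows "L1_dist mb m = 2 * k + (\<Sum>B\<in>{B. B \<noteq> {} \<and> B \<subseteq> A}. \<bar>mb B - m B\<bar> - (m B - mb B))"
proof -
  let ?S = "{B. B \<noteq> {} \<and> B \<subseteq> A}"
  have s1: "sum m ?S = 1" using inM_sum[OF assms(2)] .
  have s2: "sum mb ?S + k = 1" using mb split_sum[of mb A] sum_univ[of mb] by (simp add: is_mass_def k_def)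
  have "L1_dist mb m = (\<Sum>B\<in>?S. \<bar>mb B - m B\<bar>) + (\<Sum>B\<in>{B. \<not> B \<subseteq> A}. \<bar>mb B - m B\<bar>)"
    unfolding L1_dist_def by (rule split_sum)
  also have "(\<Sum>B\<in>{B. \<not> B \<subseteq> A}. \<bar>mb B - m B\<bar>) = k"
    unfolding k_def using inM_zero[OF assms(2)] mb by (intro sum.cong) (auto simp: is_mass_def)
  also have "(\<Sum>B\<in>?S. \<bar>mb B - m B\<bar>) = (\<Sum>B\<in>?S. \<bar>mb B - m B\<bar> - (m B - mb B)) + (sum m ?S - sum mb ?S)"
    by (simp add: sum_subtractf)
  finally show ?thesis using s1 s2 by simp
qed

theorem theorem1:
  fixes mb :: "'a::finite set \<Rightarrow> real" and A :: "'a set"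
  assumes "is_mass mb" and "A \<noteq> {}"
  shows "{ma \<in> mass_space_M A. \<forall>m' \<in> mass_space_M A. L1_dist mb ma \<le> L1_dist mb m'}
       = {ma. is_mass ma \<and> core ma \<subseteq> A \<and> (\<forall>B. B \<noteq> {} \<and> B \<subseteq> A \<longrightarrow> mb B \<le> ma B)}"
proof -
  let ?S = "{B. B \<noteq> {} \<and> B \<subseteq> A}"
  define k where "k = sum mb {B. \<not> B \<subseteq> A}"
  define D where "D m = (\<Sum>B\<in>?S. \<bar>mb B - m B\<bar> - (m B - mb B))" for m
  have mb: "mb {} = 0" "\<And>B. 0 \<le> mb B" "sum mb UNIV = 1" using assms(1) by (auto simp: is_mass_def)
  have L1: "L1_dist mb m = 2 * k + D m" if "m \<in> mass_space_M A" for m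
    using L1_form[OF assms(1) that] unfolding k_def D_def by simp
  have Dnn: "D m \<ge> 0" for m unfolding D_def by (intro sum_nonneg) auto
  have D0: "D m = 0 \<longleftrightarrow> (\<forall>B\<in>?S. mb B \<le> m B)" for m
  proof -
    have "D m = 0 \<longleftrightarrow> (\<forall>B\<in>?S. \<bar>mb B - m B\<bar> - (m B - mb B) = 0)"
      unfolding D_def by (intro sum_nonneg_eq_0_iff) auto
    also have "\<dots> \<longleftrightarrow> (\<forall>B\<in>?S. mb B \<le> m B)"
      by (intro ball_cong refl) (simp add: abs_if)
    finally show ?thesis .
  qed
  have s2: "sum mb ?S + k = 1" using split_sum[of mb A] sum_univ[of mb] mb by (simp add: k_def)
  have k0: "k \<ge> 0" unfolding k_def using mb by (simp add: sum_nonneg)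
  define m0 where "m0 B = (if B \<subseteq> A then mb B + (if B = A then k else 0) else 0)" for B
  have m0e: "m0 {} = 0" using assms(2) mb by (simp add: m0_def)
  have m0nn: "0 \<le> m0 B" for B using mb k0 by (simp add: m0_def)
  have "sum m0 ?S = sum (\<lambda>B. mb B + (if B = A then k else 0)) ?S"
    by (rule sum.cong) (auto simp: m0_def)
  also have "\<dots> = sum mb ?S + k" using assms(2) by (simp add: sum.distrib)
  finally have "sum m0 ?S = 1" using s2 by simp
  moreover have "sum m0 {B. \<not> B \<subseteq> A} = 0" by (simp add: m0_def)
  ultimately have m0s: "sum m0 UNIV = 1" using split_sum[of m0 A] sum_univ[of m0, OF m0e] by simp
  have m0le: "m0 B \<le> 1" for B
  proof -
    have "m0 B \<le> sum m0 UNIV" by (rule member_le_sum) (auto simp: m0nn)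
    then show ?thesis using m0s by simp
  qed
  have m0M: "m0 \<in> mass_space_M A"
    using m0e m0nn m0le m0s unfolding mass_space_M_def is_mass_def focal_elements_def
    by (auto simp: m0_def split: if_splits)
  have Dm0: "D m0 = 0" using D0 k0 by (auto simp: m0_def)
  have coreM: "m \<in> mass_space_M A \<longleftrightarrow> is_mass m \<and> core m \<subseteq> A" for m
    unfolding mass_space_M_def core_def by auto
  show ?thesis
  proof (intro equalityI subsetI)
    fix ma assume "ma \<in> {ma \<in> mass_space_M A. \<forall>m' \<in> mass_space_M A. L1_dist mb ma \<le> L1_dist mb m'}"
    then have M: "ma \<in> mass_space_M A" and le: "L1_dist mb ma \<le> L1_dist mb m0" using m0M by auto
    have "D ma = 0" using le L1[OF M] L1[OF m0M] Dm0 Dnn[of ma] by simp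
    then show "ma \<in> {ma. is_mass ma \<and> core ma \<subseteq> A \<and> (\<forall>B. B \<noteq> {} \<and> B \<subseteq> A \<longrightarrow> mb B \<le> ma B)}"
      using M coreM D0 by auto
  next
    fix ma assume "ma \<in> {ma. is_mass ma \<and> core ma \<subseteq> A \<and> (\<forall>B. B \<noteq> {} \<and> B \<subseteq> A \<longrightarrow> mb B \<le> ma B)}"
    then have M: "ma \<in> mass_space_M A" and "D ma = 0" using coreM D0 by auto
    then show "ma \<in> {ma \<in> mass_space_M A. \<forall>m' \<in> mass_space_M A. L1_dist mb ma \<le> L1_dist mb m'}"
      using L1 Dnn by auto
  qed
qed

end
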